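(* Let $f_{1,\infty}=\{f_n\}$ be a periodic sequence of continuous maps $f_n:[0,1]\to[0,1]$ (i.e. there is $k\in\mathbb{N}$ with $f_{j+kl}=f_j$ for all $l\in\mathbb{N}$, $1\le j\le k$). Then $([0,1],f_{1,\infty})$ is strongly multi-sensitive if and only if $(\mathcal{M}([0,1]),\widetilde f_{1,\infty})$ is strongly multi-sensitive; and $([0,1],f_{1,\infty})$ is $\mathcal{N}$-sensitive if and only if $(\mathcal{M}([0,1]),\widetilde f_{1,\infty})$ is $\mathcal{N}$-sensitive.
   Context: $\mathcal{M}([0,1])$ is the space of Borel probability measures on $[0,1]$ with the Prohorov metric $\mathcal{D}(\nu_1,\nu_2)=\inf\{\epsilon>0:\nu_1(B)\le\nu_2(N(B,\epsilon))+\epsilon \text{ for all Borel } B\}$, $N(B,\epsilon)$ the $\epsilon$-neighbourhood of $B$. The induced system is $\widetilde{f}_{1,\infty}=\{\widetilde f_n\}$ with $\widetilde f_n(\nu)=\nu\circ f_n^{-1}$ (push-forward). For a sequence $h_{1,\infty}=\{h_n\}$ of continuous self-maps of a metric space $(Z,\rho)$, write $h_i^n=h_{n+i-1}\circ\cdots\circ h_i$, $h_{1,\infty}^{[k]}=\{h^k_{k(n-1)+1}\}_{n=1}^\infty$ (its $n$-fold composition from index $1$ is $h_1^{kn}$), and $N_{h_{1,\infty}}(V,\delta)=\{n\in\mathbb{N}:\exists u,v\in V,\ \rho(h_1^n(u),h_1^n(v))>\delta\}$. For $\mathbf{v}=(v_1,\dots,v_r)\in\mathbb{N}^r$, the system is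 multi-sensitive with respect to $\mathbf{v}$ if there is $\delta>0$ such that $\bigcap_{i=1}^r N_{h_{1,\infty}^{[v_i]}}(U_i,\delta)\ne\varnothing$ for all nonempty open $U_1,\dots,U_r$; $\mathcal{N}$-sensitive if multi-sensitive with respect to $(1,\dots,n)$ for every $n$; strongly multi-sensitive if multi-sensitive with respect to every vector in $\mathbb{N}^r$, for every $r$. *)

theory Defs
  imports "HOL-Probability.Probability"
begin

text \<open>Sequences of maps are indexed from 1 (the value at index 0 is irrelevant).
  iter h i n is h_i^n = h_(n+i-1) o ... o h_i, with h_i^0 = id.\<close>

primrec iter :: "(nat \<Rightarrow> 'a \<Rightarrow> 'a) \<Rightarrow> nat \<Rightarrow> nat \<Rightarrow> 'a \<Rightarrow> 'a" where
  "iter h i 0 = id"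
| "iter h i (Suc n) = h (i + n) \<circ> iter h i n"

definition blocks :: "(nat \<Rightarrow> 'a \<Rightarrow> 'a) \<Rightarrow> nat \<Rightarrow> nat \<Rightarrow> 'a \<Rightarrow> 'a" where
  "blocks h k n = iter h (k * (n - 1) + 1) k"

definition mopen_in :: "'a set \<Rightarrow> ('a \<Rightarrow> 'a \<Rightarrow> real) \<Rightarrow> 'a set \<Rightarrow> bool" where
  "mopen_in S d U \<longleftrightarrow> U \<subseteq> S \<and> (\<forall>x\<in>U. \<exists>e>0. \<forall>y\<in>S. d x y < e \<longrightarrow> y \<in> U)"

definition Nset :: "('a \<Rightarrow> 'a \<Rightarrow> real) \<Rightarrow> (nat \<Rightarrow> 'a \<Rightarrow> 'a) \<Rightarrow> 'a set \<Rightarrow> real \<Rightarrow> nat set" where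
  "Nset d h V \<delta> = {n. n \<ge> 1 \<and> (\<exists>u\<in>V. \<exists>v\<in>V. d (iter h 1 n u) (iter h 1 n v) > \<delta>)}"

definition multi_sensitive ::
  "'a set \<Rightarrow> ('a \<Rightarrow> 'a \<Rightarrow> real) \<Rightarrow> (nat \<Rightarrow> 'a \<Rightarrow> 'a) \<Rightarrow> nat list \<Rightarrow> bool" where
  "multi_sensitive S d h vs \<longleftrightarrow>
     (\<exists>\<delta>>0. \<forall>Us :: 'a set list. length Us = length vs \<longrightarrow>
        (\<forall>U\<in>set Us. mopen_in S d U \<and> U \<noteq> {}) \<longrightarrow>
        (\<Inter>i<length vs. Nset d (blocks h (vs ! i)) (Us ! i) \<delta>) \<noteq> {})"

definition N_sensitive :: "'a set \<Rightarrow> ('a \<Rightarrow> 'a \<Rightarrow> real) \<Rightarrow> (nat \<Rightarrow> 'a \<Rightarrow> 'a) \<Rightarrow> bool" where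
  "N_sensitive S d h \<longleftrightarrow> (\<forall>n\<ge>1. multi_sensitive S d h [1..<n+1])"

definition strongly_multi_sensitive ::
  "'a set \<Rightarrow> ('a \<Rightarrow> 'a \<Rightarrow> real) \<Rightarrow> (nat \<Rightarrow> 'a \<Rightarrow> 'a) \<Rightarrow> bool" where
  "strongly_multi_sensitive S d h \<longleftrightarrow>
     (\<forall>vs. vs \<noteq> [] \<longrightarrow> (\<forall>v\<in>set vs. v \<ge> 1) \<longrightarrow> multi_sensitive S d h vs)"

definition unit_borel :: "real measure" where
  "unit_borel = restrict_space borel {0..1}"

definition PM01 :: "real measure set" where
  "PM01 = {M. prob_space M \<and> sets M = sets unit_borel}"

definition nbhd01 :: "real set \<Rightarrow> real \<Rightarrow> real set" where
  "nbhd01 B \<epsilon> = {x \<in> {0..1}. \<exists>b\<in>B. dist x b < \<epsilon>}"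

definition prohorov :: "real measure \<Rightarrow> real measure \<Rightarrow> real" where
  "prohorov \<nu>1 \<nu>2 = Inf {\<epsilon>. \<epsilon> > 0 \<and>
     (\<forall>B\<in>sets unit_borel. measure \<nu>1 B \<le> measure \<nu>2 (nbhd01 B \<epsilon>) + \<epsilon>)}"

definition induced :: "(nat \<Rightarrow> real \<Rightarrow> real) \<Rightarrow> nat \<Rightarrow> real measure \<Rightarrow> real measure" where
  "induced f n \<nu> = distr \<nu> unit_borel (f n)"

end

theory Submission
  imports Defs
begin

lemma iter_add: "iter h i (a + b) = iter h (i + a) b \<circ> iter h i a"
  by (induction b) (auto simp: add.assoc)

lemma iter_blocks: "iter (blocks h v) 1 n = iter h 1 (v * n)"
proof (induction n)
  case 0 then show ?case by simp
next
  case (Suc n)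
  have "iter h 1 (v * Suc n) = iter h (1 + v * n) v \<circ> iter h 1 (v * n)"
    using iter_add[of h 1 "v * n" v] by (simp add: add.commute)
  then show ?case using Suc by (simp add: blocks_def add.commute)
qed

lemma Nset_blocks: "Nset d (blocks h v) U \<delta> = {n. n \<ge> 1 \<and> (\<exists>u\<in>U. \<exists>w\<in>U. d (iter h 1 (v * n) u) (iter h 1 (v * n) w) > \<delta>)}"
  unfolding Nset_def iter_blocks by simp

definition sens1 :: "'a set \<Rightarrow> ('a \<Rightarrow> 'a \<Rightarrow> real) \<Rightarrow> (nat \<Rightarrow> 'a \<Rightarrow> 'a) \<Rightarrow> bool" where
  "sens1 S d h \<longleftrightarrow> (\<exists>\<delta>>0. \<forall>U. mopen_in S d U \<and> U \<noteq> {} \<longrightarrow> Nset d h U \<delta> \<noteq> {})"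

definition cofin :: "'a set \<Rightarrow> ('a \<Rightarrow> 'a \<Rightarrow> real) \<Rightarrow> (nat \<Rightarrow> 'a \<Rightarrow> 'a) \<Rightarrow> bool" where
  "cofin S d h \<longleftrightarrow> (\<exists>\<delta>>0. \<forall>U. mopen_in S d U \<and> U \<noteq> {} \<longrightarrow>
      (\<exists>N. \<forall>n\<ge>N. n \<ge> 1 \<longrightarrow> n \<in> Nset d h U \<delta>))"

lemma finite_eventually:
  fixes m :: nat
  assumes "\<forall>c<m. \<exists>N::nat. \<forall>n\<ge>N. P c n"
  shows "\<exists>N. \<forall>n\<ge>N. \<forall>c<m. P c n"
  using assms
proof (induction m)
  case 0 then show ?case by auto
next
  case (Suc m)
  then obtain N1 where N1: "\<forall>n\<ge>N1. \<forall>c<m. P c n" by auto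
  obtain N2 where N2: "\<forall>n\<ge>N2. P m n" using Suc.prems by auto
  show ?case
    by (rule exI[of _ "max N1 N2"]) (auto simp: less_Suc_eq N1 N2)
qed

lemma finite_min_pos:
  fixes P :: "nat \<Rightarrow> real \<Rightarrow> bool" and m :: nat
  assumes "\<forall>c<m. \<exists>d>0. P c d"
    and mono: "\<And>c d d'. P c d \<Longrightarrow> 0 < d' \<Longrightarrow> d' \<le> d \<Longrightarrow> P c d'"
  shows "\<exists>d>0. \<forall>c<m. P c d"
  using assms(1)
proof (induction m)
  case 0 then show ?case by (auto intro: exI[of _ 1])
next
  case (Suc m)
  then obtain d1 where d1: "d1 > 0" "\<forall>c<m. P c d1" by auto
  obtain d2 where d2: "d2 > 0" "P m d2" using Suc.prems by auto
  show ?case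
    apply (rule exI[of _ "min d1 d2"])
    using d1 d2 by (auto simp: less_Suc_eq intro: mono)
qed

lemma cofin_multi:
  assumes "cofin S d h" "\<forall>v\<in>set vs. v \<ge> 1"
  shows "multi_sensitive S d h vs"
proof -
  obtain \<delta> where \<delta>: "\<delta> > 0" "\<forall>U. mopen_in S d U \<and> U \<noteq> {} \<longrightarrow>
      (\<exists>N. \<forall>n\<ge>N. n \<ge> 1 \<longrightarrow> n \<in> Nset d h U \<delta>)"
    using assms(1) unfolding cofin_def by auto
  show ?thesis unfolding multi_sensitive_def
  proof (intro exI[of _ \<delta>] conjI allI impI)
    fix Us :: "'a set list"
    assume len: "length Us = length vs" and op: "\<forall>U\<in>set Us. mopen_in S d U \<and> U \<noteq> {}"
    have "\<forall>c<length vs. \<exists>N. \<forall>n\<ge>N. n \<ge> 1 \<longrightarrow> n \<in> Nset d h (Us ! c) \<delta>"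
      using op len \<delta>(2) by (metis nth_mem)
    then obtain N where N: "\<forall>n\<ge>N. \<forall>c<length vs. n \<ge> 1 \<longrightarrow> n \<in> Nset d h (Us ! c) \<delta>"
      using finite_eventually[where P="\<lambda>c n. n \<ge> 1 \<longrightarrow> n \<in> Nset d h (Us ! c) \<delta>"] by blast
    have "Suc N \<in> (\<Inter>i<length vs. Nset d (blocks h (vs ! i)) (Us ! i) \<delta>)"
    proof (clarsimp)
      fix i assume i: "i < length vs"
      have v: "vs ! i \<ge> 1" using assms(2) i by auto
      have "vs ! i * Suc N \<ge> 1 * Suc N" using v by (intro mult_le_mono1)
      then have "vs ! i * Suc N \<in> Nset d h (Us ! i) \<delta>" using N i by auto
      then show "Suc N \<in> Nset d (blocks h (vs ! i)) (Us ! i) \<delta>"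
        unfolding Nset_blocks by (simp add: Nset_def)
    qed
    then show "(\<Inter>i<length vs. Nset d (blocks h (vs ! i)) (Us ! i) \<delta>) \<noteq> {}" by blast
  qed (use \<delta> in auto)
qed

lemma cofin_strong: "cofin S d h \<Longrightarrow> strongly_multi_sensitive S d h"
  unfolding strongly_multi_sensitive_def by (auto intro: cofin_multi)

lemma cofin_N: "cofin S d h \<Longrightarrow> N_sensitive S d h"
  unfolding N_sensitive_def by (auto intro!: cofin_multi)

lemma strong_N: "strongly_multi_sensitive S d h \<Longrightarrow> N_sensitive S d h"
  unfolding strongly_multi_sensitive_def N_sensitive_def by auto

lemma N_sens1:
  assumes "N_sensitive S d h" shows "sens1 S d h"
proof -
  have "multi_sensitive S d h [1]" using assms unfolding N_sensitive_def
    by (auto dest: spec[of _ 1])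
  then obtain \<delta> where \<delta>: "\<delta> > 0" "\<forall>Us :: 'a set list. length Us = 1 \<longrightarrow>
        (\<forall>U\<in>set Us. mopen_in S d U \<and> U \<noteq> {}) \<longrightarrow>
        (\<Inter>i<1. Nset d (blocks h ([1::nat] ! i)) (Us ! i) \<delta>) \<noteq> {}"
    unfolding multi_sensitive_def by auto
  have "Nset d (blocks h 1) U \<delta> = Nset d h U \<delta>" for U
    unfolding Nset_blocks by (simp add: Nset_def)
  then show ?thesis unfolding sens1_def using \<delta>
  proof (intro exI[of _ \<delta>] conjI allI impI)
    fix U assume "mopen_in S d U \<and> U \<noteq> {}"
    then have "(\<Inter>i<1. Nset d (blocks h ([1::nat] ! i)) ([U] ! i) \<delta>) \<noteq> {}"
      using \<delta>(2) by (auto dest: spec[of _ "[U]"])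
    then show "Nset d h U \<delta> \<noteq> {}" using \<open>\<And>U. Nset d (blocks h 1) U \<delta> = Nset d h U \<delta>\<close>
      by (simp add: lessThan_empty_iff)
  qed (use \<delta> in auto)
qed


lemma nbhd01_single: "nbhd01 {p::real} e = {x\<in>{0..1}. \<bar>x - p\<bar> < e}"
  unfolding nbhd01_def by (auto simp: dist_real_def)

lemma mopen_nbhd: "mopen_in {0..1} dist (nbhd01 {p::real} e)"
  unfolding mopen_in_def nbhd01_single
proof (intro conjI ballI)
  fix x :: real assume x: "x \<in> {x \<in> {0..1}. \<bar>x - p\<bar> < e}"
  show "\<exists>e'>0. \<forall>y\<in>{0..1}. dist x y < e' \<longrightarrow> y \<in> {x \<in> {0..1}. \<bar>x - p\<bar> < e}"
    using x by (intro exI[of _ "e - \<bar>x - p\<bar>"]) (auto simp: dist_real_def)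
qed auto

lemma mopen_ival: "0 \<le> (a::real) \<Longrightarrow> b \<le> 1 \<Longrightarrow> mopen_in {0..1} dist {x. a < x \<and> x < b}"
  unfolding mopen_in_def
proof (intro conjI ballI)
  fix x assume x: "x \<in> {x. a < x \<and> x < b}"
  show "\<exists>e'>0. \<forall>y\<in>{0..1}. dist x y < e' \<longrightarrow> y \<in> {x. a < x \<and> x < b}"
    using x by (intro exI[of _ "min (x - a) (b - x)"]) (auto simp: dist_real_def)
qed auto

lemma mopen_nbhd_sub:
  assumes "mopen_in {0..1} dist (U::real set)" "p \<in> U" shows "\<exists>e>0. nbhd01 {p} e \<subseteq> U"
proof -
  obtain e where e: "e > 0" "\<forall>y\<in>{0..1}. dist p y < e \<longrightarrow> y \<in> U"
    using assms unfolding mopen_in_def by blast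
  have "nbhd01 {p} e \<subseteq> U"
  proof
    fix y assume "y \<in> nbhd01 {p} e"
    then have "y \<in> {0..1}" "dist p y < e" unfolding nbhd01_single by (auto simp: dist_real_def)
    then show "y \<in> U" using e by blast
  qed
  then show ?thesis using e by blast
qed

lemma nbhd_convex: "u \<in> nbhd01 {p::real} e \<Longrightarrow> v \<in> nbhd01 {p} e \<Longrightarrow> {min u v..max u v} \<subseteq> nbhd01 {p} e"
  unfolding nbhd01_single by auto

lemma ivt_img:
  fixes h :: "real \<Rightarrow> real"
  assumes "continuous_on {0..1} h" "u \<in> {0..1}" "v \<in> {0..1}"
  shows "{min (h u) (h v)..max (h u) (h v)} \<subseteq> h ` {min u v..max u v}"
proof -
  have sub: "{min u v..max u v} \<subseteq> {0..1}" using assms(2,3) by auto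
  have conn: "connected (h ` {min u v..max u v})"
    by (rule connected_continuous_image[OF continuous_on_subset[OF assms(1) sub]]) simp
  have hu: "h u \<in> h ` {min u v..max u v}" and hv: "h v \<in> h ` {min u v..max u v}" by auto
  have "{h u..h v} \<subseteq> h ` {min u v..max u v}" "{h v..h u} \<subseteq> h ` {min u v..max u v}"
    using connected_contains_Icc[OF conn hu hv] connected_contains_Icc[OF conn hv hu] by auto
  then show ?thesis by (cases "h u \<le> h v") (auto simp: min_def max_def)
qed

lemma piece_in:
  fixes m :: nat and x y d :: real
  assumes m: "m \<ge> 1" and md: "2 / m < d" and xy: "0 \<le> x" "y \<le> 1" "y - x > d"
  shows "\<exists>c<m. {real c / m..(real c + 1) / m} \<subseteq> {x..y}"
proof -
  define c where "c = nat \<lceil>x * m\<rceil>"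
  have mpos: "real m > 0" using m by simp
  have xm: "x * m \<ge> 0" using xy by simp
  have "\<lceil>x * m\<rceil> \<ge> 0" using xm by simp
  then have rc: "real c = of_int \<lceil>x * m\<rceil>" unfolding c_def by simp
  have c1: "real c \<ge> x * m" using rc le_of_int_ceiling[of "x * m"] by linarith
  have c2: "real c < x * m + 1" using rc ceiling_correct[of "x * m"] by linarith
  have a: "real c / m \<ge> x" using c1 mpos by (simp add: field_simps)
  have b0: "(real c + 1) / m < (x * m + 2) / m"
    by (rule divide_strict_right_mono) (use c2 mpos in auto)
  have "(x * m + 2) / m = x + 2 / m" using mpos by (simp add: field_simps)
  then have b: "(real c + 1) / m < x + 2 / m" using b0 by simp
  then have b2: "(real c + 1) / m < y" using md xy by linarith
  then have "(real c + 1) / m < 1" using xy by linarith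
  then have "real c + 1 < m" using mpos by (simp add: field_simps)
  then have "c < m" by linarith
  then show ?thesis using a b2 by (intro exI[of _ c]) auto
qed


locale perint =
  fixes f :: "nat \<Rightarrow> real \<Rightarrow> real" and k :: nat
  assumes cont: "\<And>n. n \<ge> 1 \<Longrightarrow> continuous_on {0..1} (f n)"
    and maps: "\<And>n. n \<ge> 1 \<Longrightarrow> f n ` {0..1} \<subseteq> {0..1}"
    and kpos: "k \<ge> 1"
    and per: "\<forall>l\<ge>1. \<forall>j\<in>{1..k}. f (j + k * l) = f j"
begin

lemma per': assumes "i \<ge> 1" shows "f (i + k * l) = f i"
proof -
  define j q where "j = (i - 1) mod k + 1" and "q = (i - 1) div k"
  have i: "i = j + k * q" using assms kpos unfolding j_def q_def
    by (metis add.commute le_add_diff_inverse mod_mult_div_eq add.assoc)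
  have j: "j \<in> {1..k}" using kpos by (simp add: j_def Suc_leI)
  have A: "f (j + k * r) = f j" for r
  proof (cases r)
    case (Suc r') then show ?thesis using per j by (metis Suc_le_mono le0 One_nat_def)
  qed simp
  show ?thesis using A[of "q + l"] A[of q] i by (simp add: algebra_simps)
qed

lemma iter_per: "i \<ge> 1 \<Longrightarrow> iter f (i + k * l) n = iter f i n"
proof (induction n)
  case (Suc n)
  have "f (i + k * l + n) = f (i + n)" using per'[of "i + n" l] Suc.prems by (simp add: algebra_simps)
  then show ?case using Suc by simp
qed simp

lemma iter_props: "i \<ge> 1 \<Longrightarrow> continuous_on {0..1} (iter f i n) \<and> iter f i n ` {0..1} \<subseteq> {0..1}"
proof (induction n)
  case (Suc n)
  then have c: "continuous_on {0..1} (iter f i n)" and m: "iter f i n ` {0..1} \<subseteq> {0..1}" by auto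
  have "continuous_on {0..1} (f (i + n) \<circ> iter f i n)"
    by (rule continuous_on_compose[OF c continuous_on_subset[OF cont m]]) (use Suc.prems in simp)
  moreover have "(f (i + n) \<circ> iter f i n) ` {0..1} \<subseteq> {0..1}"
    using m maps[of "i+n"] Suc.prems by (auto simp: image_comp[symmetric])
  ultimately show ?case by simp
qed simp

lemma iter_cont: "i \<ge> 1 \<Longrightarrow> continuous_on {0..1} (iter f i n)"
  using iter_props by blast

lemma iter_maps: "i \<ge> 1 \<Longrightarrow> x \<in> {0..1} \<Longrightarrow> iter f i n x \<in> {0..1}"
  using iter_props by blast

lemma g_split: "iter f 1 (k * a + t) = iter f 1 t \<circ> iter f 1 (k * a)"
proof -
  have "iter f 1 (k * a + t) = iter f (1 + k * a) t \<circ> iter f 1 (k * a)" by (rule iter_add)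
  also have "iter f (1 + k * a) t = iter f 1 t" by (rule iter_per) simp
  finally show ?thesis .
qed

lemma G_add: "iter f 1 (k * (a + b)) = iter f 1 (k * b) \<circ> iter f 1 (k * a)"
  using g_split[of a "k * b"] by (simp add: algebra_simps)

end


definition pc :: "nat \<Rightarrow> nat \<Rightarrow> real set" where
  "pc m c = {real c / m..(real c + 1) / m}"

lemma pc_sub: "c < m \<Longrightarrow> pc m c \<subseteq> {0..1}"
  unfolding pc_def by (auto simp: field_simps)

lemma pc_ends: "m \<ge> 1 \<Longrightarrow> real c / m \<in> pc m c \<and> (real c + 1) / m \<in> pc m c \<and> real c / m \<noteq> (real c + 1) / m"
  unfolding pc_def by (auto simp: field_simps)

context perint begin

lemma sensG:
  assumes "sens1 {0..1} dist f"
  shows "\<exists>d1>0. \<forall>U. mopen_in {0..1} dist U \<and> U \<noteq> {} \<longrightarrow>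
     (\<exists>a. \<exists>u\<in>U. \<exists>v\<in>U. \<bar>iter f 1 (k * a) u - iter f 1 (k * a) v\<bar> > d1)"
proof -
  obtain \<delta> where \<delta>: "\<delta> > 0" "\<forall>U. mopen_in {0..1} dist U \<and> U \<noteq> {} \<longrightarrow> Nset dist f U \<delta> \<noteq> {}"
    using assms unfolding sens1_def by blast
  have "\<forall>t<k. \<exists>d>0. \<forall>x\<in>{0..1}. \<forall>y\<in>{0..1}. \<bar>x - y\<bar> \<le> d \<longrightarrow> \<bar>iter f 1 t x - iter f 1 t y\<bar> \<le> \<delta>"
  proof (intro allI impI)
    fix t assume "t < k"
    have "uniformly_continuous_on {0..1} (iter f 1 t)"
      by (rule compact_uniformly_continuous[OF iter_cont]) auto
    then obtain d where d: "d > 0" "\<forall>x\<in>{0..1}. \<forall>x'\<in>{0..1}. dist x' x < d \<longrightarrow>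
        dist (iter f 1 t x') (iter f 1 t x) < \<delta>"
      unfolding uniformly_continuous_on_def using \<delta>(1) by blast
    show "\<exists>d>0. \<forall>x\<in>{0..1}. \<forall>y\<in>{0..1}. \<bar>x - y\<bar> \<le> d \<longrightarrow> \<bar>iter f 1 t x - iter f 1 t y\<bar> \<le> \<delta>"
    proof (intro exI[of _ "d/2"] conjI ballI impI)
      fix x y :: real assume "x \<in> {0..1}" "y \<in> {0..1}" "\<bar>x - y\<bar> \<le> d / 2"
      then have "dist (iter f 1 t x) (iter f 1 t y) < \<delta>" using d by (auto simp: dist_real_def)
      then show "\<bar>iter f 1 t x - iter f 1 t y\<bar> \<le> \<delta>" by (simp add: dist_real_def)
    qed (use d in auto)
  qed
  then obtain d1 where d1: "d1 > 0"
    "\<forall>t<k. \<forall>x\<in>{0..1}. \<forall>y\<in>{0..1}. \<bar>x - y\<bar> \<le> d1 \<longrightarrow> \<bar>iter f 1 t x - iter f 1 t y\<bar> \<le> \<delta>"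
  proof (elim finite_min_pos[THEN exE])
    fix c d d' assume "\<forall>x\<in>{0..1}. \<forall>y\<in>{0..1}. \<bar>x - y\<bar> \<le> d \<longrightarrow> \<bar>iter f 1 c x - iter f 1 c y\<bar> \<le> \<delta>"
      "0 < d'" "d' \<le> (d::real)"
    then show "\<forall>x\<in>{0..1}. \<forall>y\<in>{0..1}. \<bar>x - y\<bar> \<le> d' \<longrightarrow> \<bar>iter f 1 c x - iter f 1 c y\<bar> \<le> \<delta>"
      by (meson order_trans)
  qed blast
  show ?thesis
  proof (intro exI[of _ d1] conjI allI impI)
    fix U :: "real set" assume U: "mopen_in {0..1} dist U \<and> U \<noteq> {}"
    then obtain n where n: "n \<in> Nset dist f U \<delta>" using \<delta>(2) by blast
    then obtain u v where uv: "u \<in> U" "v \<in> U" "dist (iter f 1 n u) (iter f 1 n v) > \<delta>"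
      unfolding Nset_def by blast
    have U01: "U \<subseteq> {0..1}" using U unfolding mopen_in_def by blast
    define a t where "a = n div k" and "t = n mod k"
    have nat: "n = k * a + t" unfolding a_def t_def by simp
    have t: "t < k" unfolding t_def using kpos by simp
    have split: "iter f 1 n = iter f 1 t \<circ> iter f 1 (k * a)" using g_split nat by simp
    have "\<bar>iter f 1 (k * a) u - iter f 1 (k * a) v\<bar> > d1"
    proof (rule ccontr)
      assume "\<not> ?thesis"
      moreover have "iter f 1 (k * a) u \<in> {0..1}" "iter f 1 (k * a) v \<in> {0..1}"
        using iter_maps uv U01 by auto
      ultimately have "\<bar>iter f 1 t (iter f 1 (k * a) u) - iter f 1 t (iter f 1 (k * a) v)\<bar> \<le> \<delta>"
        using d1(2) t by simp
      then show False using uv(3) split by (simp add: dist_real_def)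
    qed
    then show "\<exists>a. \<exists>u\<in>U. \<exists>v\<in>U. \<bar>iter f 1 (k * a) u - iter f 1 (k * a) v\<bar> > d1"
      using uv by blast
  qed (use d1 in auto)
qed

lemma img_trans:
  assumes "A' \<subseteq> iter f 1 (k * T) ` A" "A'' \<subseteq> iter f 1 (k * T') ` A'"
  shows "A'' \<subseteq> iter f 1 (k * (T + T')) ` A"
proof -
  have "A'' \<subseteq> iter f 1 (k * T') ` iter f 1 (k * T) ` A" using assms by (meson image_mono order_trans)
  moreover have "iter f 1 (k * (T + T')) ` A = iter f 1 (k * T') ` iter f 1 (k * T) ` A"
    by (simp only: G_add image_comp)
  ultimately show ?thesis by simp
qed

lemma big_piece:
  assumes sG: "\<forall>U. mopen_in {0..1} dist U \<and> U \<noteq> {} \<longrightarrow>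
     (\<exists>a. \<exists>u\<in>U. \<exists>v\<in>U. \<bar>iter f 1 (k * a) u - iter f 1 (k * a) v\<bar> > d1)"
    and m: "m \<ge> 1" "2 / m < d1"
    and V: "mopen_in {0..1} dist V" "V \<noteq> {}" "\<forall>u\<in>V. \<forall>v\<in>V. {min u v..max u v} \<subseteq> V"
  shows "\<exists>a c. c < m \<and> pc m c \<subseteq> iter f 1 (k * a) ` V \<and>
     (\<exists>u\<in>V. \<exists>v\<in>V. \<bar>iter f 1 (k * a) u - iter f 1 (k * a) v\<bar> > d1)"
proof -
  obtain a u v where uv: "u \<in> V" "v \<in> V" "\<bar>iter f 1 (k * a) u - iter f 1 (k * a) v\<bar> > d1"
    using sG V by blast
  have V01: "V \<subseteq> {0..1}" using V unfolding mopen_in_def by blast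
  define h where "h = iter f 1 (k * a)"
  define x y where "x = min (h u) (h v)" and "y = max (h u) (h v)"
  have hu: "h u \<in> {0..1}" "h v \<in> {0..1}" using iter_maps uv V01 unfolding h_def by auto
  have "0 \<le> x" "y \<le> 1" "y - x > d1" using hu uv(3) unfolding x_def y_def h_def by auto
  then obtain c where c: "c < m" "{real c / m..(real c + 1) / m} \<subseteq> {x..y}"
    using piece_in[OF m] by blast
  have "{x..y} \<subseteq> h ` {min u v..max u v}" unfolding x_def y_def h_def
    by (rule ivt_img[OF iter_cont]) (use uv V01 in auto)
  also have "\<dots> \<subseteq> h ` V" using V(3) uv by (intro image_mono) blast
  finally show ?thesis using c uv unfolding pc_def h_def by blast
qed

lemma piece_step:
  assumes sG: "\<forall>U. mopen_in {0..1} dist U \<and> U \<noteq> {} \<longrightarrow>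
     (\<exists>a. \<exists>u\<in>U. \<exists>v\<in>U. \<bar>iter f 1 (k * a) u - iter f 1 (k * a) v\<bar> > d1)"
    and m: "m \<ge> 1" "2 / m < d1" and c: "c < m"
  shows "\<exists>a c'. a \<ge> 1 \<and> c' < m \<and> pc m c' \<subseteq> iter f 1 (k * a) ` pc m c"
proof -
  define V where "V = {x. real c / m < x \<and> x < (real c + 1) / m}"
  have mpos: "real m > 0" using m by simp
  have "real c + 1 \<le> m" using c by linarith
  then have le1: "(real c + 1) / m \<le> 1" using mpos by (simp add: field_simps)
  have Vo: "mopen_in {0..1} dist V" unfolding V_def by (rule mopen_ival) (use le1 in auto)
  have "(real c + 1/2) / m \<in> V" unfolding V_def using mpos by (simp add: field_simps)
  then have Vne: "V \<noteq> {}" by blast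
  have Vc: "\<forall>u\<in>V. \<forall>v\<in>V. {min u v..max u v} \<subseteq> V" unfolding V_def by auto
  obtain a c' u v where ac: "c' < m" "pc m c' \<subseteq> iter f 1 (k * a) ` V" and
    uv: "u \<in> V" "v \<in> V" "\<bar>iter f 1 (k * a) u - iter f 1 (k * a) v\<bar> > d1"
    using big_piece[OF sG m Vo Vne Vc] by blast
  have "a \<noteq> 0"
  proof
    assume "a = 0"
    then have "\<bar>u - v\<bar> > d1" using uv by simp
    moreover have "\<bar>u - v\<bar> < 1 / m"
    proof -
      have "(real c + 1) / m = real c / m + 1 / m" by (simp add: add_divide_distrib)
      then show ?thesis using uv(1,2) unfolding V_def by (simp add: abs_less_iff)
    qed
    moreover have "1 / m \<le> 2 / m" using mpos by (simp add: field_simps)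
    ultimately show False using m by linarith
  qed
  moreover have "V \<subseteq> pc m c" unfolding V_def pc_def by auto
  ultimately have "a \<ge> 1" "pc m c' \<subseteq> iter f 1 (k * a) ` pc m c"
    using ac(2) image_mono[of V "pc m c" "iter f 1 (k * a)"] by auto
  then show ?thesis using ac(1) by blast
qed

lemma reach_cycle:
  assumes step: "\<forall>c<m. \<exists>a c'. a \<ge> 1 \<and> c' < m \<and> pc m c' \<subseteq> iter f 1 (k * a) ` pc m c"
    and c: "c < m"
  shows "\<exists>c' T M. c' < m \<and> M \<ge> 1 \<and> pc m c' \<subseteq> iter f 1 (k * T) ` pc m c \<and>
           pc m c' \<subseteq> iter f 1 (k * M) ` pc m c'"
proof -
  have "\<forall>c\<in>{..<m}. \<exists>p. snd p \<ge> 1 \<and> fst p < m \<and> pc m (fst p) \<subseteq> iter f 1 (k * snd p) ` pc m c"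
    using step by fastforce
  from bchoice[OF this] obtain F where F: "\<forall>c\<in>{..<m}. snd (F c) \<ge> 1 \<and> fst (F c) < m \<and>
      pc m (fst (F c)) \<subseteq> iter f 1 (k * snd (F c)) ` pc m c"
    by blast
  define \<sigma> where "\<sigma> = (\<lambda>c. fst (F c))"
  define \<tau> where "\<tau> = (\<lambda>c. snd (F c))"
  define s where "s = (\<lambda>i. (\<sigma> ^^ i) c)"
  have s_lt: "s i < m" for i
    by (induction i) (use c F in \<open>auto simp: s_def \<sigma>_def\<close>)
  have s_Suc: "s (Suc i) = \<sigma> (s i)" for i by (simp add: s_def)
  have stepS: "\<tau> (s i) \<ge> 1 \<and> pc m (s (Suc i)) \<subseteq> iter f 1 (k * \<tau> (s i)) ` pc m (s i)" for i
    using F s_lt[of i] by (simp add: s_Suc \<sigma>_def \<tau>_def)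
  have reach: "\<exists>T. pc m (s j) \<subseteq> iter f 1 (k * T) ` pc m c" for j
  proof (induction j)
    case 0 show ?case by (rule exI[of _ 0]) (simp add: s_def)
  next
    case (Suc j)
    then obtain T where T: "pc m (s j) \<subseteq> iter f 1 (k * T) ` pc m c" by blast
    show ?case using img_trans[OF T stepS[of j, THEN conjunct2]] by blast
  qed
  have cyc: "\<exists>T\<ge>1. pc m (s (Suc (i + d))) \<subseteq> iter f 1 (k * T) ` pc m (s i)" for i d
  proof (induction d)
    case 0 then show ?case using stepS[of i] by auto
  next
    case (Suc d)
    then obtain T where T: "T \<ge> 1" "pc m (s (Suc (i + d))) \<subseteq> iter f 1 (k * T) ` pc m (s i)" by blast
    have "pc m (s (Suc (Suc (i + d)))) \<subseteq> iter f 1 (k * (T + \<tau> (s (Suc (i + d))))) ` pc m (s i)"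
      using img_trans[OF T(2) stepS[of "Suc (i + d)", THEN conjunct2]] .
    then show ?case using T(1) by (intro exI[of _ "T + \<tau> (s (Suc (i + d)))"]) auto
  qed
  have "\<not> inj_on s {..m}"
  proof
    assume "inj_on s {..m}"
    then have "card (s ` {..m}) = Suc m" by (simp add: card_image)
    moreover have "s ` {..m} \<subseteq> {..<m}" using s_lt by auto
    then have "card (s ` {..m}) \<le> m" using card_mono[of "{..<m}"] by fastforce
    ultimately show False by simp
  qed
  then obtain i j where ij: "i \<noteq> j" "s i = s j" unfolding inj_on_def by blast
  then obtain i d where id: "s (Suc (i + d)) = s i"
  proof (cases "i < j")
    case True
    then obtain d where "j = Suc (i + d)" using less_iff_Suc_add by blast
    then show ?thesis using that ij by metis
  next
    case False
    then have "j < i" using ij by simp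
    then obtain d where "i = Suc (j + d)" using less_iff_Suc_add by blast
    then show ?thesis using that ij by metis
  qed
  obtain T where T: "pc m (s i) \<subseteq> iter f 1 (k * T) ` pc m c" using reach by blast
  obtain M where M: "M \<ge> 1" "pc m (s i) \<subseteq> iter f 1 (k * M) ` pc m (s i)" using cyc[of i d] id by auto
  show ?thesis using s_lt[of i] T M by blast
qed

lemma cycle_bound:
  assumes m: "m \<ge> 1" and c: "c < m" and M: "M \<ge> 1"
    and cyc: "pc m c \<subseteq> iter f 1 (k * M) ` pc m c"
  shows "\<exists>\<eta>>0. \<forall>n. \<exists>u\<in>pc m c. \<exists>v\<in>pc m c. \<bar>iter f 1 n u - iter f 1 n v\<bar> \<ge> \<eta>"
proof -
  have ra: "pc m c \<subseteq> iter f 1 (k * (a * M)) ` pc m c" for a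
  proof (induction a)
    case 0 show ?case by simp
  next
    case (Suc a)
    have "pc m c \<subseteq> iter f 1 (k * (a * M + M)) ` pc m c" using img_trans[OF Suc.IH cyc] .
    then show ?case by (simp add: algebra_simps)
  qed
  have noncon: "\<exists>u\<in>pc m c. \<exists>v\<in>pc m c. iter f 1 t u \<noteq> iter f 1 t v" for t
  proof (rule ccontr)
    assume H: "\<not> ?thesis"
    define a where "a = Suc t"
    have "t \<le> a" unfolding a_def by simp
    also have "a \<le> a * M" using M by (metis mult_le_mono2 mult.right_neutral)
    also have "a * M \<le> k * (a * M)" using kpos by (metis mult_le_mono1 mult_1)
    finally have ge: "t \<le> k * (a * M)" .
    define r where "r = k * (a * M) - t"
    have tr: "k * (a * M) = t + r" using ge unfolding r_def by simp
    have eq: "iter f 1 (k * (a * M)) = iter f (1 + t) r \<circ> iter f 1 t"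
      unfolding tr by (rule iter_add)
    have e: "real c / m \<in> pc m c" "(real c + 1) / m \<in> pc m c" "real c / m \<noteq> (real c + 1) / m"
      using pc_ends[OF m, of c] by simp_all
    from subsetD[OF ra[of a] e(1)] obtain u where u: "u \<in> pc m c" "real c / m = iter f 1 (k * (a * M)) u"
      by (rule imageE)
    from subsetD[OF ra[of a] e(2)] obtain v where v: "v \<in> pc m c" "(real c + 1) / m = iter f 1 (k * (a * M)) v"
      by (rule imageE)
    have "iter f 1 t u = iter f 1 t v" using H u v by blast
    then have "iter f 1 (k * (a * M)) u = iter f 1 (k * (a * M)) v" using eq by simp
    then show False using u v e(3) by simp
  qed
  have "\<forall>t<k * M. \<exists>\<eta>>0. \<exists>u\<in>pc m c. \<exists>v\<in>pc m c. \<bar>iter f 1 t u - iter f 1 t v\<bar> \<ge> \<eta>"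
  proof (intro allI impI)
    fix t
    obtain u v where "u \<in> pc m c" "v \<in> pc m c" "iter f 1 t u \<noteq> iter f 1 t v" using noncon by blast
    then show "\<exists>\<eta>>0. \<exists>u\<in>pc m c. \<exists>v\<in>pc m c. \<bar>iter f 1 t u - iter f 1 t v\<bar> \<ge> \<eta>"
      by (intro exI[of _ "\<bar>iter f 1 t u - iter f 1 t v\<bar>"]) auto
  qed
  then obtain \<eta> where \<eta>: "\<eta> > 0" "\<forall>t<k * M. \<exists>u\<in>pc m c. \<exists>v\<in>pc m c. \<bar>iter f 1 t u - iter f 1 t v\<bar> \<ge> \<eta>"
  proof (elim finite_min_pos[THEN exE])
    fix c' d d' assume "\<exists>u\<in>pc m c. \<exists>v\<in>pc m c. \<bar>iter f 1 c' u - iter f 1 c' v\<bar> \<ge> d" "0 < d'" "d' \<le> (d::real)"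
    then show "\<exists>u\<in>pc m c. \<exists>v\<in>pc m c. \<bar>iter f 1 c' u - iter f 1 c' v\<bar> \<ge> d'"
      by (meson order_trans)
  qed blast
  show ?thesis
  proof (intro exI[of _ \<eta>] conjI allI)
    fix n
    have kM: "k * M > 0" using kpos M by simp
    define a t where "a = n div (k * M)" and "t = n mod (k * M)"
    have n0: "n = (n div (k * M)) * (k * M) + n mod (k * M)" by (rule div_mult_mod_eq[symmetric])
    have n: "n = k * (a * M) + t" using n0 unfolding a_def t_def by (simp add: ac_simps)
    have t: "t < k * M" unfolding t_def using kM by simp
    obtain u v where uv: "u \<in> pc m c" "v \<in> pc m c" "\<bar>iter f 1 t u - iter f 1 t v\<bar> \<ge> \<eta>"
      using \<eta>(2) t by blast
    obtain u' where u': "u' \<in> pc m c" "iter f 1 (k * (a * M)) u' = u" using ra[of a] uv(1) by blast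
    obtain v' where v': "v' \<in> pc m c" "iter f 1 (k * (a * M)) v' = v" using ra[of a] uv(2) by blast
    have "iter f 1 n = iter f 1 t \<circ> iter f 1 (k * (a * M))" using n g_split by simp
    then have "\<bar>iter f 1 n u' - iter f 1 n v'\<bar> \<ge> \<eta>" using u' v' uv by simp
    then show "\<exists>u\<in>pc m c. \<exists>v\<in>pc m c. \<bar>iter f 1 n u - iter f 1 n v\<bar> \<ge> \<eta>"
      using u'(1) v'(1) by blast
  qed (use \<eta> in auto)
qed

lemma sens_cofin:
  assumes "sens1 {0..1} dist f"
  shows "cofin {0..1} dist f"
proof -
  obtain d1 where d1: "d1 > 0" and sG: "\<forall>U. mopen_in {0..1} dist U \<and> U \<noteq> {} \<longrightarrow>
     (\<exists>a. \<exists>u\<in>U. \<exists>v\<in>U. \<bar>iter f 1 (k * a) u - iter f 1 (k * a) v\<bar> > d1)"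
    using sensG[OF assms] by blast
  obtain n0 :: nat where n0: "2 / d1 < real n0" using reals_Archimedean2 by blast
  define m where "m = Suc n0"
  have m1: "m \<ge> 1" unfolding m_def by simp
  have "2 / d1 < real m" using n0 unfolding m_def by simp
  then have "2 < d1 * real m" using d1 by (simp add: field_simps)
  then have m2: "2 / real m < d1" using m1 by (simp add: field_simps)
  have step: "\<forall>c<m. \<exists>a c'. a \<ge> 1 \<and> c' < m \<and> pc m c' \<subseteq> iter f 1 (k * a) ` pc m c"
    using piece_step[OF sG m1 m2] by blast
  have each: "\<forall>c<m. \<exists>\<eta>>0. \<exists>T. \<forall>n. \<exists>u\<in>pc m c. \<exists>v\<in>pc m c.
      \<bar>iter f 1 (k * T + n) u - iter f 1 (k * T + n) v\<bar> \<ge> \<eta>"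
  proof (intro allI impI)
    fix c assume c: "c < m"
    obtain c' T M where cTM: "c' < m" "M \<ge> 1" "pc m c' \<subseteq> iter f 1 (k * T) ` pc m c"
       "pc m c' \<subseteq> iter f 1 (k * M) ` pc m c'"
      using reach_cycle[OF step c] by blast
    obtain \<eta> where \<eta>: "\<eta> > 0" "\<forall>n. \<exists>u\<in>pc m c'. \<exists>v\<in>pc m c'. \<bar>iter f 1 n u - iter f 1 n v\<bar> \<ge> \<eta>"
      using cycle_bound[OF m1 cTM(1,2,4)] by blast
    have "\<forall>n. \<exists>u\<in>pc m c. \<exists>v\<in>pc m c. \<bar>iter f 1 (k * T + n) u - iter f 1 (k * T + n) v\<bar> \<ge> \<eta>"
    proof
      fix n
      obtain u v where uv: "u \<in> pc m c'" "v \<in> pc m c'" "\<bar>iter f 1 n u - iter f 1 n v\<bar> \<ge> \<eta>"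
        using \<eta>(2) by blast
      from subsetD[OF cTM(3) uv(1)] obtain u' where u': "u' \<in> pc m c" "u = iter f 1 (k * T) u'"
        by (rule imageE)
      from subsetD[OF cTM(3) uv(2)] obtain v' where v': "v' \<in> pc m c" "v = iter f 1 (k * T) v'"
        by (rule imageE)
      have gs: "iter f 1 (k * T + n) = iter f 1 n \<circ> iter f 1 (k * T)" by (rule g_split)
      have "\<bar>iter f 1 (k * T + n) u' - iter f 1 (k * T + n) v'\<bar> \<ge> \<eta>"
        using uv(3) u' v' unfolding gs by simp
      then show "\<exists>u\<in>pc m c. \<exists>v\<in>pc m c. \<bar>iter f 1 (k * T + n) u - iter f 1 (k * T + n) v\<bar> \<ge> \<eta>"
        using u'(1) v'(1) by blast
    qed
    then show "\<exists>\<eta>>0. \<exists>T. \<forall>n. \<exists>u\<in>pc m c. \<exists>v\<in>pc m c.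
      \<bar>iter f 1 (k * T + n) u - iter f 1 (k * T + n) v\<bar> \<ge> \<eta>" using \<eta>(1) by blast
  qed
  then obtain \<eta> where \<eta>: "\<eta> > 0" "\<forall>c<m. \<exists>T. \<forall>n. \<exists>u\<in>pc m c. \<exists>v\<in>pc m c.
      \<bar>iter f 1 (k * T + n) u - iter f 1 (k * T + n) v\<bar> \<ge> \<eta>"
  proof (elim finite_min_pos[THEN exE])
    fix c' d d' assume "\<exists>T. \<forall>n. \<exists>u\<in>pc m c'. \<exists>v\<in>pc m c'.
      \<bar>iter f 1 (k * T + n) u - iter f 1 (k * T + n) v\<bar> \<ge> d" "0 < d'" "d' \<le> (d::real)"
    then show "\<exists>T. \<forall>n. \<exists>u\<in>pc m c'. \<exists>v\<in>pc m c'.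
      \<bar>iter f 1 (k * T + n) u - iter f 1 (k * T + n) v\<bar> \<ge> d'"
      by (meson order_trans)
  qed blast
  show ?thesis unfolding cofin_def
  proof (intro exI[of _ "\<eta> / 2"] conjI allI impI)
    fix U :: "real set" assume U: "mopen_in {0..1} dist U \<and> U \<noteq> {}"
    then obtain p where p: "p \<in> U" by blast
    have U01: "U \<subseteq> {0..1}" using U unfolding mopen_in_def by blast
    obtain e where e: "e > 0" "nbhd01 {p} e \<subseteq> U" using mopen_nbhd_sub U p by blast
    define V where "V = nbhd01 {p} e"
    have Vo: "mopen_in {0..1} dist V" unfolding V_def by (rule mopen_nbhd)
    have "p \<in> V" unfolding V_def nbhd01_single using p U01 e by auto
    then have Vne: "V \<noteq> {}" by blast
    have Vc: "\<forall>u\<in>V. \<forall>v\<in>V. {min u v..max u v} \<subseteq> V" unfolding V_def using nbhd_convex by blast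
    obtain a c where ac: "c < m" "pc m c \<subseteq> iter f 1 (k * a) ` V"
      using big_piece[OF sG m1 m2 Vo Vne Vc] by blast
    obtain T where T: "\<forall>n. \<exists>u\<in>pc m c. \<exists>v\<in>pc m c.
      \<bar>iter f 1 (k * T + n) u - iter f 1 (k * T + n) v\<bar> \<ge> \<eta>" using \<eta>(2) ac(1) by blast
    show "\<exists>N. \<forall>n\<ge>N. n \<ge> 1 \<longrightarrow> n \<in> Nset dist f U (\<eta> / 2)"
    proof (intro exI[of _ "k * a + k * T"] allI impI)
      fix n assume n: "k * a + k * T \<le> n" "n \<ge> 1"
      define r where "r = n - (k * a + k * T)"
      have nr: "n = k * a + (k * T + r)" using n unfolding r_def by simp
      obtain u v where uv: "u \<in> pc m c" "v \<in> pc m c"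
        "\<bar>iter f 1 (k * T + r) u - iter f 1 (k * T + r) v\<bar> \<ge> \<eta>" using T by blast
      from subsetD[OF ac(2) uv(1)] obtain u' where u': "u' \<in> V" "u = iter f 1 (k * a) u'"
        by (rule imageE)
      from subsetD[OF ac(2) uv(2)] obtain v' where v': "v' \<in> V" "v = iter f 1 (k * a) v'"
        by (rule imageE)
      have "iter f 1 n = iter f 1 (k * T + r) \<circ> iter f 1 (k * a)" unfolding nr by (rule g_split)
      then have "\<bar>iter f 1 n u' - iter f 1 n v'\<bar> \<ge> \<eta>" using uv(3) u' v' by simp
      then have "dist (iter f 1 n u') (iter f 1 n v') > \<eta> / 2" using \<eta>(1) by (simp add: dist_real_def)
      moreover have "u' \<in> U" "v' \<in> U" using u' v' e(2) unfolding V_def by auto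
      ultimately show "n \<in> Nset dist f U (\<eta> / 2)" unfolding Nset_def using n(2) by blast
    qed
  qed (use \<eta> in auto)
qed

end

lemma space_ub[simp]: "space unit_borel = {0..1}"
  by (simp add: unit_borel_def space_restrict_space)

lemma sets_ub_iff: "A \<in> sets unit_borel \<longleftrightarrow> A \<subseteq> {0..1} \<and> A \<in> sets borel"
  unfolding unit_borel_def by (rule sets_restrict_space_iff) simp

lemma sets_ubI: "A \<in> sets borel \<Longrightarrow> A \<inter> {0..1} \<in> sets unit_borel"
  by (auto simp: sets_ub_iff)

lemma PM01_D:
  assumes "\<mu> \<in> PM01"
  shows "prob_space \<mu>" "sets \<mu> = sets unit_borel" "space \<mu> = {0..1}"
    "measurable \<mu> N = measurable unit_borel N"
proof -
  show "prob_space \<mu>" "sets \<mu> = sets unit_borel" using assms unfolding PM01_def by auto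
  then show "space \<mu> = {0..1}" using sets_eq_imp_space_eq[of \<mu> unit_borel] by simp
  show "measurable \<mu> N = measurable unit_borel N"
    by (rule measurable_cong_sets) (use \<open>sets \<mu> = sets unit_borel\<close> in auto)
qed

lemma ub_measI:
  assumes "continuous_on {0..1} h" "h ` {0..1} \<subseteq> {0..1}"
  shows "h \<in> unit_borel \<rightarrow>\<^sub>M unit_borel"
  unfolding unit_borel_def
  by (rule measurable_restrict_space2)
     (use assms borel_measurable_continuous_on_restrict[OF assms(1)] in \<open>auto simp: space_restrict_space\<close>)

lemma ub_meas_borel:
  assumes "h \<in> unit_borel \<rightarrow>\<^sub>M unit_borel"
  shows "h \<in> unit_borel \<rightarrow>\<^sub>M borel" "\<And>x. x \<in> {0..1} \<Longrightarrow> h x \<in> {0..1}"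
  using assms unfolding unit_borel_def
  by (auto simp: measurable_restrict_space2_iff space_restrict_space)

lemma distr_PM01:
  assumes "\<mu> \<in> PM01" "h \<in> unit_borel \<rightarrow>\<^sub>M unit_borel"
  shows "distr \<mu> unit_borel h \<in> PM01"
proof -
  have hm: "h \<in> \<mu> \<rightarrow>\<^sub>M unit_borel" unfolding PM01_D(4)[OF assms(1)] by (rule assms(2))
  interpret prob_space \<mu> using PM01_D[OF assms(1)] by simp
  from hm show ?thesis unfolding PM01_def using prob_space_distr by simp
qed

lemma measure_distr_ub:
  assumes "\<mu> \<in> PM01" "h \<in> unit_borel \<rightarrow>\<^sub>M unit_borel" "B \<in> sets unit_borel"
  shows "measure (distr \<mu> unit_borel h) B = measure \<mu> (h -` B \<inter> {0..1})"
  using measure_distr[of h \<mu> unit_borel B] assms PM01_D[OF assms(1)] by simp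

lemma preimage_sets:
  assumes "\<mu> \<in> PM01" "h \<in> unit_borel \<rightarrow>\<^sub>M unit_borel" "B \<in> sets unit_borel"
  shows "h -` B \<inter> {0..1} \<in> sets \<mu>"
  using measurable_sets[OF assms(2,3)] PM01_D[OF assms(1)] by simp

lemma preimage_sets_borel:
  assumes "\<mu> \<in> PM01" "h \<in> unit_borel \<rightarrow>\<^sub>M unit_borel" "B \<in> sets borel"
  shows "h -` B \<inter> {0..1} \<in> sets \<mu>"
  using measurable_sets[OF ub_meas_borel(1)[OF assms(2)] assms(3)] PM01_D[OF assms(1)] by simp

lemma nbhd01_sets: "nbhd01 B e \<in> sets unit_borel"
proof -
  have "nbhd01 B e = (\<Union>b\<in>B. ball b e) \<inter> {0..1}"
    unfolding nbhd01_def by (auto simp: dist_commute)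
  moreover have "(\<Union>b\<in>B. ball b e) \<in> sets borel" by (intro borel_open) auto
  ultimately show ?thesis using sets_ubI by simp
qed

lemma nbhd01_sub: "nbhd01 B e \<subseteq> {0..1}"
  unfolding nbhd01_def by auto

lemma prohorov_le:
  assumes "\<epsilon> > 0" "\<forall>B\<in>sets unit_borel. measure \<nu>1 B \<le> measure \<nu>2 (nbhd01 B \<epsilon>) + \<epsilon>"
  shows "prohorov \<nu>1 \<nu>2 \<le> \<epsilon>"
  unfolding prohorov_def
  by (rule cInf_lower) (use assms in \<open>auto intro!: bdd_belowI[of _ 0]\<close>)

lemma prohorov_set_ne:
  assumes "\<nu>1 \<in> PM01" "\<nu>2 \<in> PM01"
  shows "1 \<in> {\<epsilon>. \<epsilon> > 0 \<and> (\<forall>B\<in>sets unit_borel. measure \<nu>1 B \<le> measure \<nu>2 (nbhd01 B \<epsilon>) + \<epsilon>)}"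
proof -
  interpret p1: prob_space \<nu>1 using PM01_D[OF assms(1)] by simp
  have "measure \<nu>1 B \<le> measure \<nu>2 (nbhd01 B 1) + 1" for B
    using p1.prob_le_1[of B] measure_nonneg[of \<nu>2 "nbhd01 B 1"] by linarith
  then show ?thesis by simp
qed

lemma prohorov_lt:
  assumes "\<nu>1 \<in> PM01" "\<nu>2 \<in> PM01" "prohorov \<nu>1 \<nu>2 < e"
  shows "\<exists>\<epsilon>. \<epsilon> > 0 \<and> \<epsilon> < e \<and> (\<forall>B\<in>sets unit_borel. measure \<nu>1 B \<le> measure \<nu>2 (nbhd01 B \<epsilon>) + \<epsilon>)"
  using cInf_lessD[OF _ assms(3)[unfolded prohorov_def]] prohorov_set_ne[OF assms(1,2)] by blast

lemma prohorov_ge: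
  assumes "\<nu>1 \<in> PM01" "\<nu>2 \<in> PM01"
    and "\<And>\<epsilon>. 0 < \<epsilon> \<Longrightarrow> \<epsilon> < c \<Longrightarrow> \<exists>B\<in>sets unit_borel. measure \<nu>1 B > measure \<nu>2 (nbhd01 B \<epsilon>) + \<epsilon>"
  shows "prohorov \<nu>1 \<nu>2 \<ge> c"
  unfolding prohorov_def
proof (rule cInf_greatest)
  show "{\<epsilon>. \<epsilon> > 0 \<and> (\<forall>B\<in>sets unit_borel. measure \<nu>1 B \<le> measure \<nu>2 (nbhd01 B \<epsilon>) + \<epsilon>)} \<noteq> {}"
    using prohorov_set_ne[OF assms(1,2)] by blast
next
  fix x assume "x \<in> {\<epsilon>. \<epsilon> > 0 \<and> (\<forall>B\<in>sets unit_borel. measure \<nu>1 B \<le> measure \<nu>2 (nbhd01 B \<epsilon>) + \<epsilon>)}"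
  then have x: "x > 0" "\<forall>B\<in>sets unit_borel. measure \<nu>1 B \<le> measure \<nu>2 (nbhd01 B x) + x" by auto
  show "c \<le> x"
  proof (rule ccontr)
    assume "\<not> c \<le> x"
    then obtain B where "B \<in> sets unit_borel" "measure \<nu>1 B > measure \<nu>2 (nbhd01 B x) + x"
      using assms(3)[of x] x(1) by auto
    then show False using x(2) by fastforce
  qed
qed

context perint begin

lemma iter_meas: "i \<ge> 1 \<Longrightarrow> iter f i n \<in> unit_borel \<rightarrow>\<^sub>M unit_borel"
  by (rule ub_measI[OF iter_cont]) (use iter_maps in auto)

lemma f_meas: "n \<ge> 1 \<Longrightarrow> f n \<in> unit_borel \<rightarrow>\<^sub>M unit_borel"
  by (rule ub_measI[OF cont maps])

lemma iter_induced:
  assumes "\<mu> \<in> PM01" "i \<ge> 1"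
  shows "iter (induced f) i n \<mu> = distr \<mu> unit_borel (iter f i n)"
proof (induction n)
  case 0
  have "distr \<mu> unit_borel (\<lambda>x. x) = \<mu>" by (rule distr_id2) (use PM01_D[OF assms(1)] in simp)
  then show ?case by (simp add: id_def)
next
  case (Suc n)
  have m1: "iter f i n \<in> \<mu> \<rightarrow>\<^sub>M unit_borel" using iter_meas[OF assms(2)] PM01_D[OF assms(1)] by simp
  have "iter (induced f) i (Suc n) \<mu> = induced f (i + n) (iter (induced f) i n \<mu>)" by simp
  also have "\<dots> = distr (distr \<mu> unit_borel (iter f i n)) unit_borel (f (i + n))"
    unfolding Suc.IH by (simp add: induced_def)
  also have "\<dots> = distr \<mu> unit_borel (f (i + n) \<circ> iter f i n)"
    by (rule distr_distr[OF f_meas m1]) (use assms(2) in simp)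
  finally show ?case by (simp add: comp_def)
qed

end


lemma nbhd_nbhd: "nbhd01 (nbhd01 {p::real} a) b \<subseteq> nbhd01 {p} (a + b)"
  unfolding nbhd01_def dist_real_def by auto

lemma nbhd_mono: "a \<le> b \<Longrightarrow> nbhd01 B a \<subseteq> nbhd01 B b"
  unfolding nbhd01_def by (auto intro: less_le_trans)

context perint begin

lemma sens1_back:
  assumes "sens1 PM01 prohorov (induced f)"
  shows "sens1 {0..1} dist f"
proof -
  obtain \<delta> where \<delta>: "\<delta> > 0" and H: "\<forall>W. mopen_in PM01 prohorov W \<and> W \<noteq> {} \<longrightarrow>
      Nset prohorov (induced f) W \<delta> \<noteq> {}"
    using assms unfolding sens1_def by blast
  show ?thesis unfolding sens1_def
  proof (intro exI[of _ "\<delta> / 2"] conjI allI impI)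
    fix U :: "real set" assume U: "mopen_in {0..1} dist U \<and> U \<noteq> {}"
    then obtain p where p: "p \<in> U" by blast
    have U01: "U \<subseteq> {0..1}" using U unfolding mopen_in_def by blast
    obtain e where e: "e > 0" "nbhd01 {p} e \<subseteq> U" using mopen_nbhd_sub U p by blast
    define r where "r = min e (\<delta> / 2)"
    have r: "r > 0" "r \<le> e" "r \<le> \<delta> / 2" using e \<delta> unfolding r_def by auto
    define W where "W = {\<nu> \<in> PM01. \<exists>\<epsilon>. 0 < \<epsilon> \<and> \<epsilon> < r \<and> measure \<nu> (nbhd01 {p} \<epsilon>) \<ge> 1 - \<epsilon>}"
    have Wo: "mopen_in PM01 prohorov W"
      unfolding mopen_in_def
    proof (intro conjI ballI)
      show "W \<subseteq> PM01" by (auto simp: W_def)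
      fix \<nu> assume "\<nu> \<in> W"
      then obtain \<epsilon> where \<nu>: "\<nu> \<in> PM01" "0 < \<epsilon>" "\<epsilon> < r" "measure \<nu> (nbhd01 {p} \<epsilon>) \<ge> 1 - \<epsilon>"
        unfolding W_def by blast
      show "\<exists>e'>0. \<forall>y\<in>PM01. prohorov \<nu> y < e' \<longrightarrow> y \<in> W"
      proof (intro exI[of _ "r - \<epsilon>"] conjI ballI impI)
        fix y assume y: "y \<in> PM01" "prohorov \<nu> y < r - \<epsilon>"
        obtain \<epsilon>' where \<epsilon>': "\<epsilon>' > 0" "\<epsilon>' < r - \<epsilon>"
          "\<forall>B\<in>sets unit_borel. measure \<nu> B \<le> measure y (nbhd01 B \<epsilon>') + \<epsilon>'"
          using prohorov_lt[OF \<nu>(1) y] by blast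
        interpret py: prob_space y using PM01_D[OF y(1)] by simp
        have "measure \<nu> (nbhd01 {p} \<epsilon>) \<le> measure y (nbhd01 (nbhd01 {p} \<epsilon>) \<epsilon>') + \<epsilon>'"
          using \<epsilon>'(3) nbhd01_sets by blast
        also have "measure y (nbhd01 (nbhd01 {p} \<epsilon>) \<epsilon>') \<le> measure y (nbhd01 {p} (\<epsilon> + \<epsilon>'))"
          by (rule py.finite_measure_mono[OF nbhd_nbhd]) (use nbhd01_sets PM01_D(2)[OF y(1)] in simp)
        finally have "measure y (nbhd01 {p} (\<epsilon> + \<epsilon>')) \<ge> 1 - (\<epsilon> + \<epsilon>')" using \<nu>(4) by linarith
        then show "y \<in> W" unfolding W_def using y(1) \<nu>(2) \<epsilon>' by (intro CollectI conjI exI[of _ "\<epsilon> + \<epsilon>'"]) auto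
      qed (use \<nu> in auto)
    qed
    have pI: "p \<in> {0..1}" using p U01 by blast
    have Wne: "W \<noteq> {}"
    proof -
      have ret: "return unit_borel p \<in> PM01" unfolding PM01_def
        using prob_space_return[of p unit_borel] pI by simp
      have "p \<in> nbhd01 {p} (r / 2)" unfolding nbhd01_single using pI r by simp
      then have "measure (return unit_borel p) (nbhd01 {p} (r / 2)) = 1"
        using measure_return[OF nbhd01_sets] by simp
      then have "return unit_borel p \<in> W" unfolding W_def using ret r
        by (intro CollectI conjI exI[of _ "r / 2"]) auto
      then show ?thesis by blast
    qed
    obtain n where n: "n \<in> Nset prohorov (induced f) W \<delta>" using H Wo Wne by blast
    then obtain \<mu> \<nu> where n1: "n \<ge> 1" and \<mu>\<nu>: "\<mu> \<in> W" "\<nu> \<in> W"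
      and far: "prohorov (iter (induced f) 1 n \<mu>) (iter (induced f) 1 n \<nu>) > \<delta>"
      unfolding Nset_def by blast
    obtain \<epsilon>\<mu> where \<mu>: "\<mu> \<in> PM01" "0 < \<epsilon>\<mu>" "\<epsilon>\<mu> < r" "measure \<mu> (nbhd01 {p} \<epsilon>\<mu>) \<ge> 1 - \<epsilon>\<mu>"
      using \<mu>\<nu>(1) unfolding W_def by blast
    obtain \<epsilon>\<nu> where \<nu>: "\<nu> \<in> PM01" "0 < \<epsilon>\<nu>" "\<epsilon>\<nu> < r" "measure \<nu> (nbhd01 {p} \<epsilon>\<nu>) \<ge> 1 - \<epsilon>\<nu>"
      using \<mu>\<nu>(2) unfolding W_def by blast
    define G where "G = iter f 1 n"
    have Gm: "G \<in> unit_borel \<rightarrow>\<^sub>M unit_borel" unfolding G_def by (rule iter_meas) simp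
    have G01: "x \<in> {0..1} \<Longrightarrow> G x \<in> {0..1}" for x unfolding G_def by (rule iter_maps) simp_all
    have far2: "prohorov (distr \<mu> unit_borel G) (distr \<nu> unit_borel G) > \<delta>"
      using far iter_induced[OF \<mu>(1), of 1 n] iter_induced[OF \<nu>(1), of 1 n] unfolding G_def by simp
    interpret p\<mu>: prob_space \<mu> using PM01_D[OF \<mu>(1)] by simp
    interpret p\<nu>: prob_space \<nu> using PM01_D[OF \<nu>(1)] by simp
    have Amusub: "nbhd01 {p} \<epsilon>\<mu> \<subseteq> U" using nbhd_mono[of \<epsilon>\<mu> e "{p}"] \<mu>(3) r e(2) by auto
    have Anusub: "nbhd01 {p} \<epsilon>\<nu> \<subseteq> U" using nbhd_mono[of \<epsilon>\<nu> e "{p}"] \<nu>(3) r e(2) by auto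
    show "Nset dist f U (\<delta> / 2) \<noteq> {}"
    proof
      assume empty: "Nset dist f U (\<delta> / 2) = {}"
      have close: "\<bar>G u - G v\<bar> \<le> \<delta> / 2" if "u \<in> U" "v \<in> U" for u v
      proof (rule ccontr)
        assume "\<not> ?thesis"
        then have "dist (iter f 1 n u) (iter f 1 n v) > \<delta> / 2" unfolding G_def
          by (simp add: dist_real_def)
        then have "n \<in> Nset dist f U (\<delta> / 2)" unfolding Nset_def using n1 that by blast
        then show False using empty by blast
      qed
      have "prohorov (distr \<mu> unit_borel G) (distr \<nu> unit_borel G) \<le> 3 * \<delta> / 4"
      proof (rule prohorov_le)
        show "3 * \<delta> / 4 > 0" using \<delta> by simp
        show "\<forall>B\<in>sets unit_borel. measure (distr \<mu> unit_borel G) B \<le>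
            measure (distr \<nu> unit_borel G) (nbhd01 B (3 * \<delta> / 4)) + 3 * \<delta> / 4"
        proof
          fix B assume B: "B \<in> sets unit_borel"
          have eq1: "measure (distr \<mu> unit_borel G) B = measure \<mu> (G -` B \<inter> {0..1})"
            by (rule measure_distr_ub[OF \<mu>(1) Gm B])
          have eq2: "measure (distr \<nu> unit_borel G) (nbhd01 B (3 * \<delta> / 4)) =
              measure \<nu> (G -` nbhd01 B (3 * \<delta> / 4) \<inter> {0..1})"
            by (rule measure_distr_ub[OF \<nu>(1) Gm nbhd01_sets])
          show "measure (distr \<mu> unit_borel G) B \<le>
            measure (distr \<nu> unit_borel G) (nbhd01 B (3 * \<delta> / 4)) + 3 * \<delta> / 4"
          proof (cases "\<exists>x\<in>nbhd01 {p} \<epsilon>\<mu>. G x \<in> B")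
            case True
            then obtain x where x: "x \<in> nbhd01 {p} \<epsilon>\<mu>" "G x \<in> B" by blast
            have sub: "nbhd01 {p} \<epsilon>\<nu> \<subseteq> G -` nbhd01 B (3 * \<delta> / 4) \<inter> {0..1}"
            proof
              fix y assume y: "y \<in> nbhd01 {p} \<epsilon>\<nu>"
              have y01: "y \<in> {0..1}" using y nbhd01_sub by blast
              have "\<bar>G y - G x\<bar> \<le> \<delta> / 2" using close Amusub Anusub x y by blast
              then have "dist (G y) (G x) < 3 * \<delta> / 4" using \<delta> by (simp add: dist_real_def)
              then have "G y \<in> nbhd01 B (3 * \<delta> / 4)" unfolding nbhd01_def using G01[OF y01] x(2) by blast
              then show "y \<in> G -` nbhd01 B (3 * \<delta> / 4) \<inter> {0..1}" using y01 by blast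
            qed
            have "measure \<nu> (nbhd01 {p} \<epsilon>\<nu>) \<le> measure \<nu> (G -` nbhd01 B (3 * \<delta> / 4) \<inter> {0..1})"
              by (rule p\<nu>.finite_measure_mono[OF sub preimage_sets[OF \<nu>(1) Gm nbhd01_sets]])
            moreover have "measure \<mu> (G -` B \<inter> {0..1}) \<le> 1" by (rule p\<mu>.prob_le_1)
            ultimately show ?thesis using eq1 eq2 \<nu>(3,4) r(3) \<delta> by linarith
          next
            case False
            then have sub: "G -` B \<inter> {0..1} \<subseteq> space \<mu> - nbhd01 {p} \<epsilon>\<mu>"
              using PM01_D(3)[OF \<mu>(1)] by auto
            have "measure \<mu> (G -` B \<inter> {0..1}) \<le> measure \<mu> (space \<mu> - nbhd01 {p} \<epsilon>\<mu>)"
              by (rule p\<mu>.finite_measure_mono[OF sub]) (use nbhd01_sets PM01_D(2)[OF \<mu>(1)] in auto)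
            also have "\<dots> = 1 - measure \<mu> (nbhd01 {p} \<epsilon>\<mu>)"
              by (rule p\<mu>.prob_compl) (use nbhd01_sets PM01_D(2)[OF \<mu>(1)] in auto)
            finally have "measure \<mu> (G -` B \<inter> {0..1}) \<le> \<epsilon>\<mu>" using \<mu>(4) by linarith
            moreover have "measure \<nu> (G -` nbhd01 B (3 * \<delta> / 4) \<inter> {0..1}) \<ge> 0" by simp
            ultimately show ?thesis using eq1 eq2 \<mu>(3) r(3) \<delta> by linarith
          qed
        qed
      qed
      then show False using far2 \<delta> by linarith
    qed
  qed (use \<delta> in auto)
qed

end

lemma prohorov_close:
  assumes \<mu>: "\<mu> \<in> PM01" and \<phi>: "\<phi> \<in> unit_borel \<rightarrow>\<^sub>M unit_borel" and \<epsilon>: "\<epsilon> > 0"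
    and d: "\<forall>x\<in>{0..1}. \<bar>\<phi> x - x\<bar> < \<epsilon>"
  shows "prohorov \<mu> (distr \<mu> unit_borel \<phi>) \<le> \<epsilon>"
proof (rule prohorov_le[OF \<epsilon>], intro ballI)
  fix B assume B: "B \<in> sets unit_borel"
  interpret prob_space \<mu> using PM01_D[OF \<mu>] by simp
  have B01: "B \<subseteq> {0..1}" using B by (simp add: sets_ub_iff)
  have sub: "B \<subseteq> \<phi> -` nbhd01 B \<epsilon> \<inter> {0..1}"
  proof
    fix x assume x: "x \<in> B"
    then have x01: "x \<in> {0..1}" using B01 by blast
    have "\<phi> x \<in> {0..1}" using ub_meas_borel(2)[OF \<phi> x01] .
    moreover have "dist (\<phi> x) x < \<epsilon>" using d x01 by (simp add: dist_real_def)
    ultimately show "x \<in> \<phi> -` nbhd01 B \<epsilon> \<inter> {0..1}" unfolding nbhd01_def using x x01 by blast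
  qed
  have "measure \<mu> B \<le> measure \<mu> (\<phi> -` nbhd01 B \<epsilon> \<inter> {0..1})"
    by (rule finite_measure_mono[OF sub preimage_sets[OF \<mu> \<phi> nbhd01_sets]])
  also have "\<dots> = measure (distr \<mu> unit_borel \<phi>) (nbhd01 B \<epsilon>)"
    by (rule measure_distr_ub[OF \<mu> \<phi> nbhd01_sets, symmetric])
  finally show "measure \<mu> B \<le> measure (distr \<mu> unit_borel \<phi>) (nbhd01 B \<epsilon>) + \<epsilon>" using \<epsilon> by linarith
qed

lemma prohorov_sep:
  assumes \<mu>: "\<mu> \<in> PM01" and \<Phi>: "\<Phi> \<in> unit_borel \<rightarrow>\<^sub>M unit_borel" and \<Psi>: "\<Psi> \<in> unit_borel \<rightarrow>\<^sub>M unit_borel"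
    and \<eta>: "\<eta> > 0" and d: "\<forall>x\<in>{0..1}. \<Psi> x \<ge> \<Phi> x + \<eta>"
  shows "prohorov (distr \<mu> unit_borel \<Psi>) (distr \<mu> unit_borel \<Phi>) \<ge> \<eta> / 4"
proof -
  interpret prob_space \<mu> using PM01_D[OF \<mu>] by simp
  have sp: "space \<mu> = {0..1}" using PM01_D[OF \<mu>] by simp
  have \<Phi>01: "x \<in> {0..1} \<Longrightarrow> \<Phi> x \<in> {0..1}" for x using ub_meas_borel(2)[OF \<Phi>] .
  have \<Psi>01: "x \<in> {0..1} \<Longrightarrow> \<Psi> x \<in> {0..1}" for x using ub_meas_borel(2)[OF \<Psi>] .
  have "\<Psi> 0 \<ge> \<Phi> 0 + \<eta>" using d by simp
  then have \<eta>1: "\<eta> \<le> 1" using \<Phi>01[of 0] \<Psi>01[of 0] by auto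
  define L where "L = 3 * \<eta> / 4"
  have L: "L > 0" unfolding L_def using \<eta> by simp
  define Q where "Q = nat \<lceil>1 / L\<rceil> + 1"
  define I where "I q = {real q * L .. real q * L + L}" for q :: nat
  have cover: "{0..1} \<subseteq> (\<Union>q\<in>{..<Q}. \<Phi> -` I q \<inter> {0..1})"
  proof
    fix x :: real assume x: "x \<in> {0..1}"
    define y where "y = \<Phi> x"
    have y: "y \<in> {0..1}" using \<Phi>01[OF x] unfolding y_def .
    define q where "q = nat \<lfloor>y / L\<rfloor>"
    have yL: "y / L \<ge> 0" using y L by simp
    have q1: "real q \<le> y / L" unfolding q_def using yL by linarith
    have q2: "y / L < real q + 1" unfolding q_def using yL by linarith
    have "real q * L \<le> y" using q1 L by (simp add: field_simps)
    moreover have "y \<le> real q * L + L" using q2 L by (simp add: field_simps)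
    ultimately have "y \<in> I q" unfolding I_def by simp
    moreover have "q < Q"
    proof -
      have "y / L \<le> 1 / L" using y L by (simp add: divide_right_mono)
      then have "real q \<le> real_of_int \<lceil>1 / L\<rceil>" using q1 le_of_int_ceiling[of "1 / L"] by linarith
      then have "q \<le> nat \<lceil>1 / L\<rceil>" by linarith
      then show ?thesis unfolding Q_def by simp
    qed
    ultimately show "x \<in> (\<Union>q\<in>{..<Q}. \<Phi> -` I q \<inter> {0..1})" using x unfolding y_def by blast
  qed
  have Isets: "\<Phi> -` I q \<inter> {0..1} \<in> sets \<mu>" for q
    by (rule preimage_sets_borel[OF \<mu> \<Phi>]) (simp add: I_def)
  have "1 = measure \<mu> {0..1}" using prob_space sp by simp
  also have "\<dots> \<le> measure \<mu> (\<Union>q\<in>{..<Q}. \<Phi> -` I q \<inter> {0..1})"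
    by (rule finite_measure_mono[OF cover], rule sets.finite_UN) (use Isets in auto)
  also have "\<dots> \<le> (\<Sum>q<Q. measure \<mu> (\<Phi> -` I q \<inter> {0..1}))"
    by (rule finite_measure_subadditive_finite) (use Isets in auto)
  finally have sum1: "1 \<le> (\<Sum>q<Q. measure \<mu> (\<Phi> -` I q \<inter> {0..1}))" .
  obtain q where q: "measure \<mu> (\<Phi> -` I q \<inter> {0..1}) > \<eta> / 4"
  proof (rule ccontr)
    assume "\<not> thesis"
    have all: "\<forall>q\<in>{..<Q}. measure \<mu> (\<Phi> -` I q \<inter> {0..1}) \<le> \<eta> / 4"
    proof
      fix q assume "q \<in> {..<Q}"
      show "measure \<mu> (\<Phi> -` I q \<inter> {0..1}) \<le> \<eta> / 4"
      proof (rule ccontr)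
        assume "\<not> ?thesis"
        then show False using that[of q] \<open>\<not> thesis\<close> by simp
      qed
    qed
    have "(\<Sum>q<Q. measure \<mu> (\<Phi> -` I q \<inter> {0..1})) \<le> real (card {..<Q}) * (\<eta> / 4)"
      by (rule sum_bounded_above) (use all in auto)
    also have "\<dots> = real Q * (\<eta> / 4)" by simp
    also have "\<dots> < 1"
    proof -
      have "real_of_int \<lceil>1 / L\<rceil> < 1 / L + 1" using ceiling_correct[of "1 / L"] by linarith
      moreover have "1 / L > 0" using L by simp
      then have "\<lceil>1 / L\<rceil> \<ge> 0" by linarith
      ultimately have "real Q < 1 / L + 2" unfolding Q_def by simp
      then have "real Q * (\<eta> / 4) < (1 / L + 2) * (\<eta> / 4)" using \<eta> by (simp add: mult_strict_right_mono)
      also have "(1 / L + 2) * (\<eta> / 4) = 1 / 3 + \<eta> / 2" unfolding L_def using \<eta> by (simp add: field_simps)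
      also have "\<dots> < 1" using \<eta>1 by simp
      finally show ?thesis .
    qed
    finally show False using sum1 by simp
  qed
  define t where "t = real q * L + \<eta>"
  define B where "B = {t..} \<inter> {0..1}"
  have Bs: "B \<in> sets unit_borel" unfolding B_def by (rule sets_ubI) simp
  show ?thesis
  proof (rule prohorov_ge[OF distr_PM01[OF \<mu> \<Psi>] distr_PM01[OF \<mu> \<Phi>]])
    fix \<epsilon>' :: real assume \<epsilon>': "0 < \<epsilon>'" "\<epsilon>' < \<eta> / 4"
    define S1 where "S1 = \<Phi> -` I q \<inter> {0..1}"
    define S2 where "S2 = \<Phi> -` {real q * L + L<..} \<inter> {0..1}"
    have S1s: "S1 \<in> sets \<mu>" unfolding S1_def by (rule Isets)
    have S2s: "S2 \<in> sets \<mu>" unfolding S2_def by (rule preimage_sets_borel[OF \<mu> \<Phi>]) simp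
    have m1: "measure (distr \<mu> unit_borel \<Psi>) B = measure \<mu> (\<Psi> -` B \<inter> {0..1})"
      by (rule measure_distr_ub[OF \<mu> \<Psi> Bs])
    have m2: "measure (distr \<mu> unit_borel \<Phi>) (nbhd01 B \<epsilon>') = measure \<mu> (\<Phi> -` nbhd01 B \<epsilon>' \<inter> {0..1})"
      by (rule measure_distr_ub[OF \<mu> \<Phi> nbhd01_sets])
    have sub1: "S1 \<union> S2 \<subseteq> \<Psi> -` B \<inter> {0..1}"
    proof
      fix x assume x: "x \<in> S1 \<union> S2"
      then have x01: "x \<in> {0..1}" and "\<Phi> x \<ge> real q * L" unfolding S1_def S2_def I_def
        using L by auto
      then have "\<Psi> x \<ge> t" using d unfolding t_def by force
      then show "x \<in> \<Psi> -` B \<inter> {0..1}" unfolding B_def using \<Psi>01[OF x01] x01 by auto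
    qed
    have disj: "S1 \<inter> S2 = {}" unfolding S1_def S2_def I_def by auto
    have sub2: "\<Phi> -` nbhd01 B \<epsilon>' \<inter> {0..1} \<subseteq> S2"
    proof
      fix x assume x: "x \<in> \<Phi> -` nbhd01 B \<epsilon>' \<inter> {0..1}"
      then obtain b where b: "b \<in> B" "dist (\<Phi> x) b < \<epsilon>'" unfolding nbhd01_def by auto
      then have "\<Phi> x > t - \<epsilon>'" unfolding B_def by (auto simp: dist_real_def)
      then have "\<Phi> x > real q * L + L" using \<epsilon>' unfolding t_def L_def by linarith
      then show "x \<in> S2" using x unfolding S2_def by auto
    qed
    have "measure \<mu> (S1 \<union> S2) = measure \<mu> S1 + measure \<mu> S2"
      by (rule finite_measure_Union[OF S1s S2s disj])
    moreover have "measure \<mu> (S1 \<union> S2) \<le> measure \<mu> (\<Psi> -` B \<inter> {0..1})"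
      by (rule finite_measure_mono[OF sub1 preimage_sets[OF \<mu> \<Psi> Bs]])
    moreover have "measure \<mu> (\<Phi> -` nbhd01 B \<epsilon>' \<inter> {0..1}) \<le> measure \<mu> S2"
      by (rule finite_measure_mono[OF sub2 S2s])
    moreover have "measure \<mu> S1 > \<eta> / 4" using q unfolding S1_def .
    ultimately have "measure (distr \<mu> unit_borel \<Psi>) B > measure (distr \<mu> unit_borel \<Phi>) (nbhd01 B \<epsilon>') + \<epsilon>'"
      using m1 m2 \<epsilon>' by linarith
    then show "\<exists>B\<in>sets unit_borel. measure (distr \<mu> unit_borel \<Psi>) B > measure (distr \<mu> unit_borel \<Phi>) (nbhd01 B \<epsilon>') + \<epsilon>'"
      using Bs by blast
  qed
qed


context perint begin

lemma cofin_forward: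
  assumes "cofin {0..1} dist f"
  shows "cofin PM01 prohorov (induced f)"
proof -
  obtain \<eta> where \<eta>: "\<eta> > 0" and H: "\<forall>U. mopen_in {0..1} dist U \<and> U \<noteq> {} \<longrightarrow>
      (\<exists>N. \<forall>n\<ge>N. n \<ge> 1 \<longrightarrow> n \<in> Nset dist f U \<eta>)"
    using assms unfolding cofin_def by blast
  show ?thesis unfolding cofin_def
  proof (intro exI[of _ "\<eta> / 8"] conjI allI impI)
    fix W assume W: "mopen_in PM01 prohorov W \<and> W \<noteq> {}"
    then obtain \<mu> where \<mu>W: "\<mu> \<in> W" by blast
    have \<mu>: "\<mu> \<in> PM01" using W \<mu>W unfolding mopen_in_def by blast
    obtain e where e: "e > 0" "\<forall>y\<in>PM01. prohorov \<mu> y < e \<longrightarrow> y \<in> W"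
      using W \<mu>W unfolding mopen_in_def by blast
    obtain n0 :: nat where n0: "1 / e < real n0" using reals_Archimedean2 by blast
    define m where "m = Suc n0"
    have m1: "m \<ge> 1" unfolding m_def by simp
    have mpos: "real m > 0" using m1 by simp
    have "1 / e < real m" using n0 unfolding m_def by simp
    then have "1 < e * real m" using e by (simp add: field_simps)
    then have me: "1 / real m < e" using mpos by (simp add: field_simps)
    define J where "J c = {x. real c / m < x \<and> x < (real c + 1) / m}" for c :: nat
    have J01: "c < m \<Longrightarrow> J c \<subseteq> {0..1}" for c
    proof -
      assume c: "c < m"
      have "real c + 1 \<le> m" using c by linarith
      then have "(real c + 1) / m \<le> 1" using mpos by (simp add: field_simps)
      moreover have z: "real c / m \<ge> 0" by simp
      ultimately show "J c \<subseteq> {0..1}" unfolding J_def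
      proof (intro subsetI)
        fix x assume "x \<in> {x. real c / real m < x \<and> x < (real c + 1) / real m}"
        then have h: "real c / real m < x" "x < (real c + 1) / real m" by auto
        have "0 \<le> x" using h(1) z by linarith
        moreover have "x \<le> 1" using h(2) \<open>(real c + 1) / m \<le> 1\<close> by linarith
        ultimately show "x \<in> {0..1}" by simp
      qed
    qed
    have Jo: "mopen_in {0..1} dist (J c) \<and> J c \<noteq> {}" if c: "c < m" for c
    proof
      have "real c + 1 \<le> m" using c by linarith
      then have le1: "(real c + 1) / m \<le> 1" using mpos by (simp add: field_simps)
      show "mopen_in {0..1} dist (J c)" unfolding J_def by (rule mopen_ival) (use le1 in auto)
      have "(real c + 1/2) / m \<in> J c" unfolding J_def using mpos by (simp add: field_simps)
      then show "J c \<noteq> {}" by blast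
    qed
    have "\<forall>c<m. \<exists>N. \<forall>n\<ge>N. n \<ge> 1 \<longrightarrow> n \<in> Nset dist f (J c) \<eta>" using H Jo by blast
    then obtain N where N: "\<forall>n\<ge>N. \<forall>c<m. n \<ge> 1 \<longrightarrow> n \<in> Nset dist f (J c) \<eta>"
      using finite_eventually[where P="\<lambda>c n. n \<ge> 1 \<longrightarrow> n \<in> Nset dist f (J c) \<eta>"] by blast
    show "\<exists>N. \<forall>n\<ge>N. n \<ge> 1 \<longrightarrow> n \<in> Nset prohorov (induced f) W (\<eta> / 8)"
    proof (intro exI[of _ N] allI impI)
      fix n assume n: "N \<le> n" "n \<ge> 1"
      define G where "G = iter f 1 n"
      have Gm: "G \<in> unit_borel \<rightarrow>\<^sub>M unit_borel" unfolding G_def by (rule iter_meas) simp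
      have "\<forall>c\<in>{..<m}. \<exists>lr. fst lr \<in> J c \<and> snd lr \<in> J c \<and> G (snd lr) \<ge> G (fst lr) + \<eta>"
      proof
        fix c assume "c \<in> {..<m}"
        then have "n \<in> Nset dist f (J c) \<eta>" using N n by auto
        then obtain u v where uv: "u \<in> J c" "v \<in> J c" "dist (G u) (G v) > \<eta>"
          unfolding Nset_def G_def by blast
        show "\<exists>lr. fst lr \<in> J c \<and> snd lr \<in> J c \<and> G (snd lr) \<ge> G (fst lr) + \<eta>"
        proof (cases "G u \<le> G v")
          case True
          then show ?thesis using uv by (intro exI[of _ "(u, v)"]) (auto simp: dist_real_def)
        next
          case False
          then show ?thesis using uv by (intro exI[of _ "(v, u)"]) (auto simp: dist_real_def)
        qed
      qed
      from bchoice[OF this] obtain LR where LR: "\<forall>c\<in>{..<m}. fst (LR c) \<in> J c \<and> snd (LR c) \<in> J c \<and>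
          G (snd (LR c)) \<ge> G (fst (LR c)) + \<eta>" by blast
      define l where "l c = fst (LR c)" for c
      define r where "r c = snd (LR c)" for c
      define idx where "idx x = min (nat \<lfloor>x * real m\<rfloor>) (m - 1)" for x :: real
      have idx: "idx x < m \<and> real (idx x) / m \<le> x \<and> x \<le> (real (idx x) + 1) / m" if x: "x \<in> {0..1}" for x
      proof -
        have xm: "x * real m \<ge> 0" using x by simp
        have fl1: "real (nat \<lfloor>x * real m\<rfloor>) \<le> x * real m" using xm by linarith
        have fl2: "x * real m < real (nat \<lfloor>x * real m\<rfloor>) + 1" using xm by linarith
        show ?thesis
        proof (cases "nat \<lfloor>x * real m\<rfloor> \<le> m - 1")
          case True
          then have i: "idx x = nat \<lfloor>x * real m\<rfloor>" unfolding idx_def by simp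
          have "real (idx x) / m \<le> x" using fl1 mpos unfolding i by (simp add: field_simps)
          moreover have "x \<le> (real (idx x) + 1) / m" using fl2 mpos unfolding i by (simp add: field_simps)
          moreover have "idx x < m" using True m1 unfolding i by linarith
          ultimately show ?thesis by blast
        next
          case False
          then have i: "idx x = m - 1" unfolding idx_def by simp
          have "real (nat \<lfloor>x * real m\<rfloor>) \<ge> real m" using False m1 by linarith
          then have "x * real m \<ge> real m" using fl1 by linarith
          then have x1: "x = 1" using x mpos by (simp add: mult_le_cancel_right2)
          have rm: "real (m - 1) = real m - 1" using m1 by simp
          have "real (idx x) / m \<le> x" using mpos x1 unfolding i rm by (simp add: field_simps)
          moreover have "x \<le> (real (idx x) + 1) / m" using mpos x1 unfolding i rm by (simp add: field_simps)
          moreover have "idx x < m" using m1 unfolding i by simp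
          ultimately show ?thesis by blast
        qed
      qed
      define \<phi> where "\<phi> x = l (idx x)" for x
      define \<psi> where "\<psi> x = r (idx x)" for x
      have \<phi>J: "\<phi> x \<in> J (idx x)" "\<psi> x \<in> J (idx x)" if "x \<in> {0..1}" for x
        using LR idx[OF that] unfolding \<phi>_def \<psi>_def l_def r_def by auto
      have \<phi>01: "\<phi> x \<in> {0..1}" "\<psi> x \<in> {0..1}" if "x \<in> {0..1}" for x
        using \<phi>J[OF that] J01 idx[OF that] by blast+
      have \<phi>close: "\<bar>\<phi> x - x\<bar> < 1 / m" "\<bar>\<psi> x - x\<bar> < 1 / m" if x: "x \<in> {0..1}" for x
      proof -
        have a: "(real (idx x) + 1) / m = real (idx x) / m + 1 / m" by (simp add: add_divide_distrib)
        show "\<bar>\<phi> x - x\<bar> < 1 / m" "\<bar>\<psi> x - x\<bar> < 1 / m"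
          using \<phi>J[OF x] idx[OF x] a unfolding J_def by (auto simp: abs_less_iff)
      qed
      have meas_gen: "(\<lambda>x. h (idx x)) \<in> unit_borel \<rightarrow>\<^sub>M unit_borel"
        if h01: "\<And>x. x \<in> {0..1} \<Longrightarrow> h (idx x) \<in> {0..1}" for h :: "nat \<Rightarrow> real"
      proof -
        have "(\<lambda>x::real. h (min (nat \<lfloor>x * real m\<rfloor>) (m - 1))) \<in> borel_measurable borel" by measurable
        then have "(\<lambda>x. h (idx x)) \<in> borel_measurable borel" unfolding idx_def .
        then have "(\<lambda>x. h (idx x)) \<in> unit_borel \<rightarrow>\<^sub>M borel" unfolding unit_borel_def
          by (rule measurable_restrict_space1)
        then show ?thesis unfolding unit_borel_def
          by (intro measurable_restrict_space2) (use h01 in \<open>auto simp: space_restrict_space unit_borel_def\<close>)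
      qed
      have \<phi>m: "\<phi> \<in> unit_borel \<rightarrow>\<^sub>M unit_borel" unfolding \<phi>_def
        by (rule meas_gen) (use \<phi>01 in \<open>simp add: \<phi>_def\<close>)
      have \<psi>m: "\<psi> \<in> unit_borel \<rightarrow>\<^sub>M unit_borel" unfolding \<psi>_def
        by (rule meas_gen) (use \<phi>01 in \<open>simp add: \<psi>_def\<close>)
      have inW: "distr \<mu> unit_borel h \<in> W"
        if hm: "h \<in> unit_borel \<rightarrow>\<^sub>M unit_borel" and hc: "\<forall>x\<in>{0..1}. \<bar>h x - x\<bar> < 1 / m" for h
      proof -
        have "prohorov \<mu> (distr \<mu> unit_borel h) \<le> 1 / m"
          by (rule prohorov_close[OF \<mu> hm _ hc]) (use mpos in simp)
        then show ?thesis using e(2) distr_PM01[OF \<mu> hm] me by force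
      qed
      have W1: "distr \<mu> unit_borel \<psi> \<in> W" by (rule inW[OF \<psi>m]) (use \<phi>close in blast)
      have W2: "distr \<mu> unit_borel \<phi> \<in> W" by (rule inW[OF \<phi>m]) (use \<phi>close in blast)
      have it: "iter (induced f) 1 n (distr \<mu> unit_borel h) = distr \<mu> unit_borel (G \<circ> h)"
        if hm: "h \<in> unit_borel \<rightarrow>\<^sub>M unit_borel" for h
      proof -
        have "iter (induced f) 1 n (distr \<mu> unit_borel h) = distr (distr \<mu> unit_borel h) unit_borel G"
          unfolding G_def by (rule iter_induced[OF distr_PM01[OF \<mu> hm]]) simp
        also have "\<dots> = distr \<mu> unit_borel (G \<circ> h)"
          by (rule distr_distr[OF Gm]) (unfold PM01_D(4)[OF \<mu>], rule hm)
        finally show ?thesis .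
      qed
      have GPhi: "G \<circ> \<phi> \<in> unit_borel \<rightarrow>\<^sub>M unit_borel" using measurable_comp[OF \<phi>m Gm] .
      have GPsi: "G \<circ> \<psi> \<in> unit_borel \<rightarrow>\<^sub>M unit_borel" using measurable_comp[OF \<psi>m Gm] .
      have dd: "\<forall>x\<in>{0..1}. (G \<circ> \<psi>) x \<ge> (G \<circ> \<phi>) x + \<eta>"
        using LR idx unfolding \<phi>_def \<psi>_def l_def r_def by auto
      have "prohorov (distr \<mu> unit_borel (G \<circ> \<psi>)) (distr \<mu> unit_borel (G \<circ> \<phi>)) \<ge> \<eta> / 4"
        by (rule prohorov_sep[OF \<mu> GPhi GPsi \<eta> dd])
      then have "prohorov (iter (induced f) 1 n (distr \<mu> unit_borel \<psi>))
                 (iter (induced f) 1 n (distr \<mu> unit_borel \<phi>)) > \<eta> / 8"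
        using it[OF \<psi>m] it[OF \<phi>m] \<eta> by simp
      then show "n \<in> Nset prohorov (induced f) W (\<eta> / 8)"
        unfolding Nset_def using n(2) W1 W2 by blast
    qed
  qed (use \<eta> in auto)
qed

end

theorem mainTheorem6:
  fixes f :: "nat \<Rightarrow> real \<Rightarrow> real"
  assumes cont: "\<And>n. n \<ge> 1 \<Longrightarrow> continuous_on {0..1} (f n)"
    and maps: "\<And>n. n \<ge> 1 \<Longrightarrow> f n ` {0..1} \<subseteq> {0..1}"
    and periodic: "\<exists>k\<ge>1. \<forall>l\<ge>1. \<forall>j\<in>{1..k}. f (j + k * l) = f j"
  shows "(strongly_multi_sensitive {0..1} dist f \<longleftrightarrow>
            strongly_multi_sensitive PM01 prohorov (induced f))
       \<and> (N_sensitive {0..1} dist f \<longleftrightarrow> N_sensitive PM01 prohorov (induced f))"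
proof -
  obtain k where k: "k \<ge> 1" "\<forall>l\<ge>1. \<forall>j\<in>{1..k}. f (j + k * l) = f j" using periodic by blast
  interpret perint f k
    by unfold_locales (use cont maps k in auto)
  have fwd: "sens1 {0..1} dist f \<Longrightarrow> cofin PM01 prohorov (induced f)"
    using sens_cofin cofin_forward by blast
  have bwd: "sens1 PM01 prohorov (induced f) \<Longrightarrow> cofin {0..1} dist f"
    using sens1_back sens_cofin by blast
  have 1: "strongly_multi_sensitive {0..1} dist f \<Longrightarrow> strongly_multi_sensitive PM01 prohorov (induced f)"
    using fwd strong_N N_sens1 cofin_strong by blast
  have 2: "strongly_multi_sensitive PM01 prohorov (induced f) \<Longrightarrow> strongly_multi_sensitive {0..1} dist f"
    using bwd strong_N N_sens1 cofin_strong by blast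
  have 3: "N_sensitive {0..1} dist f \<Longrightarrow> N_sensitive PM01 prohorov (induced f)"
    using fwd N_sens1 cofin_N by blast
  have 4: "N_sensitive PM01 prohorov (induced f) \<Longrightarrow> N_sensitive {0..1} dist f"
    using bwd N_sens1 cofin_N by blast
  show ?thesis using 1 2 3 4 by blast
qed

end
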